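(* Let $\Sigma=\{s_0,s_1,\dots,s_{\sigma-1}\}$ be an ordered alphabet of size $\sigma\ge 1$ with $s_0<s_1<\cdots<s_{\sigma-1}$, and let $k_0,\dots,k_{\sigma-1}$ be integers with $k_i>1$ for all $i$. Let $$K=s_{\sigma-1}^{k_{\sigma-1}}\,s_{\sigma-2}^{k_{\sigma-2}}\cdots s_1^{k_1}\,s_0^{k_0}.$$ Then a smallest suffixient set for $K\$$ has size $\chi(K)=2\sigma$.
   Context: Strings are $0$-indexed; $w[i..j]$ denotes the substring from position $i$ to $j$ inclusive. $\$\notin\Sigma$ is an end-marker smaller than every letter of $\Sigma$, occurring only at the end of $K\$$; substrings of $K\$$ are words over $\Sigma\cup\{\$\}$. For a string $v$, a substring $x$ of $v$ (possibly empty) is right-maximal if there are two distinct letters $a\ne b$ such that both $xa$ and $xb$ are substrings of $v$; the words $xa$ that are substrings of $v$, for right-maximal $x$, are called right-extensions of $v$. A set $S$ of positions of $v$ is suffixient for $v$ if every right-extension $x$ of $v$ is a suffix of $v[0..j]$ for some $j\in S$. $\chi(K)$ denotes the minimum size of a suffixient set for $K\$$. *)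

theory Defs
  imports Main "HOL-Library.Sublist"
begin

text \<open>Strings are lists, 0-indexed. A substring is a contiguous sublist (Sublist.sublist).\<close>

definition right_maximal :: "'a list \<Rightarrow> 'a list \<Rightarrow> bool" where
  "right_maximal v x \<longleftrightarrow> (\<exists>a b. a \<noteq> b \<and> sublist (x @ [a]) v \<and> sublist (x @ [b]) v)"

definition right_extension :: "'a list \<Rightarrow> 'a list \<Rightarrow> bool" where
  "right_extension v y \<longleftrightarrow> (\<exists>x a. y = x @ [a] \<and> right_maximal v x \<and> sublist (x @ [a]) v)"

definition suffixient :: "'a list \<Rightarrow> nat set \<Rightarrow> bool" where
  "suffixient v S \<longleftrightarrow> S \<subseteq> {..<length v} \<and>
     (\<forall>y. right_extension v y \<longrightarrow> (\<exists>j\<in>S. suffix y (take (Suc j) v)))"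

text \<open>Minimum size of a suffixient set of v (chi(K) is this applied to v = K\$).\<close>
definition min_suffixient_size :: "'a list \<Rightarrow> nat" where
  "min_suffixient_size v = (LEAST n. \<exists>S. suffixient v S \<and> card S = n)"

definition block_word :: "nat \<Rightarrow> (nat \<Rightarrow> 'a) \<Rightarrow> (nat \<Rightarrow> nat) \<Rightarrow> 'a list" where
  "block_word \<sigma> s k = concat (map (\<lambda>i. replicate (k i) (s i)) (rev [0..<\<sigma>]))"

end

theory Submission
  imports Defs
begin


lemma bw_Suc: "block_word (Suc n) s k = replicate (k n) (s n) @ block_word n s k"
  by (simp add: block_word_def)

lemma bw_len: "length (block_word n s k) = (\<Sum>j<n. k j)"
  by (induction n) (simp_all add: bw_Suc block_word_def)

lemma bw_nth: fixes k :: "nat \<Rightarrow> nat" shows "i < n \<Longrightarrow> (\<Sum>j<i. k j) \<le> d \<Longrightarrow> d < (\<Sum>j<Suc i. k j) \<Longrightarrow>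
   block_word n s k ! ((\<Sum>j<n. k j) - Suc d) = s i"
proof (induction n)
  case 0 then show ?case by simp
next
  case (Suc n)
  have mono: "(\<Sum>j<Suc i. k j) \<le> (\<Sum>j<n. k j)" if "i < n"
    by (rule sum_mono2) (use that in auto)
  show ?case
  proof (cases "i < n")
    case True
    with Suc mono have "d < (\<Sum>j<n. k j)" by linarith
    then have "\<not> ((\<Sum>j<n. k j) + k n - Suc d < k n)" by linarith
    then show ?thesis using Suc True
      by (simp add: bw_Suc nth_append bw_len)
  next
    case False
    then have "i = n" using Suc by simp
    then have "(\<Sum>j<n. k j) + k n - Suc d < k n" using Suc by simp
    then show ?thesis using Suc \<open>i = n\<close>
      by (simp add: bw_Suc nth_append bw_len)
  qed
qed

lemma bw_cover: fixes k :: "nat \<Rightarrow> nat" shows "d < (\<Sum>j<n. k j) \<Longrightarrow> \<exists>i<n. (\<Sum>j<i. k j) \<le> d \<and> d < (\<Sum>j<Suc i. k j)"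
proof (induction n)
  case 0 then show ?case by simp
next
  case (Suc n)
  show ?case
  proof (cases "d < (\<Sum>j<n. k j)")
    case True then show ?thesis using Suc by (meson less_SucI)
  next
    case False then show ?thesis using Suc by auto
  qed
qed

lemma occ_nth: "j < length v \<Longrightarrow> suffix y (take (Suc j) v) \<longleftrightarrow>
   length y \<le> Suc j \<and> (\<forall>u<length y. y ! u = v ! (Suc j - length y + u))"
proof
  assume j: "j < length v" and sf: "suffix y (take (Suc j) v)"
  then obtain zs where zs: "take (Suc j) v = zs @ y" by (auto simp: suffix_def)
  have lt: "length (take (Suc j) v) = Suc j" using j by simp
  then have "length y \<le> Suc j" using zs by (metis le_add2 length_append)
  moreover have "y ! u = v ! (Suc j - length y + u)" if "u < length y" for u
  proof -
    have "take (Suc j) v ! (length zs + u) = y ! u" using zs that by (simp add: nth_append)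
    moreover have "length zs = Suc j - length y" using lt zs by simp
    ultimately show ?thesis using that lt
      by (metis add_less_mono1 diff_add length_append nth_take zs le_add1 less_le_trans add.commute)
  qed
  ultimately show "length y \<le> Suc j \<and> (\<forall>u<length y. y ! u = v ! (Suc j - length y + u))" by blast
next
  assume j: "j < length v" and h: "length y \<le> Suc j \<and> (\<forall>u<length y. y ! u = v ! (Suc j - length y + u))"
  have "drop (Suc j - length y) (take (Suc j) v) = y"
    using j h by (intro nth_equalityI) (auto simp: nth_take)
  then show "suffix y (take (Suc j) v)" by (metis suffix_drop)
qed

lemma sublist_occ: "y \<noteq> [] \<Longrightarrow> sublist y v \<Longrightarrow> \<exists>j<length v. suffix y (take (Suc j) v)"
proof -
  assume ne: "y \<noteq> []" and "sublist y v"
  then obtain zs where p: "prefix zs v" and sf: "suffix y zs" by (auto simp: sublist_altdef)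
  have "zs \<noteq> []" using ne sf by (auto simp: suffix_def)
  then have "length zs - 1 < length v" "take (Suc (length zs - 1)) v = zs"
    using p by (auto simp: prefix_def neq_Nil_conv)
  then show ?thesis using sf by metis
qed

lemma occ_sublist: "suffix y (take (Suc j) v) \<Longrightarrow> sublist y v"
  by (meson prefix_imp_sublist sublist_order.dual_order.trans suffix_imp_sublist take_is_prefix)



context
  fixes \<sigma> :: nat and s :: "nat \<Rightarrow> 'a::linorder" and k :: "nat \<Rightarrow> nat" and dollar :: 'a
  assumes sg: "\<sigma> \<ge> 1"
    and sm: "strict_mono_on {..<\<sigma>} s"
    and kg: "\<And>i. i < \<sigma> \<Longrightarrow> k i > 1"
    and dl: "dollar < s 0"
begin

abbreviation P :: "nat \<Rightarrow> nat" where "P i \<equiv> (\<Sum>j<i. k j)"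
abbreviation L :: nat where "L \<equiv> P \<sigma>"
abbreviation v :: "'a list" where "v \<equiv> block_word \<sigma> s k @ [dollar]"

lemma len_v: "length v = Suc L" by (simp add: bw_len)

lemma P_Suc: "P (Suc i) = P i + k i" by simp

lemma P_mono: "i \<le> j \<Longrightarrow> P i \<le> P j"
  by (rule sum_mono2) auto

lemma P_strict: "i < j \<Longrightarrow> j \<le> \<sigma> \<Longrightarrow> P i + 2 \<le> P j"
proof (induction j)
  case 0 then show ?case by simp
next
  case (Suc j)
  have "k j \<ge> 2" using kg[of j] Suc by simp
  show ?case
  proof (cases "i = j")
    case True then show ?thesis using \<open>k j \<ge> 2\<close> by simp
  next
    case False then show ?thesis using Suc \<open>k j \<ge> 2\<close> by simp
  qed
qed

lemma P_le_L: "i \<le> \<sigma> \<Longrightarrow> P i \<le> L" by (rule P_mono)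

lemma s_inj: "i < \<sigma> \<Longrightarrow> j < \<sigma> \<Longrightarrow> s i = s j \<Longrightarrow> i = j"
  using strict_mono_on_imp_inj_on[OF sm] by (auto simp: inj_on_def)

lemma dl_ne: "i < \<sigma> \<Longrightarrow> s i \<noteq> dollar"
proof -
  assume "i < \<sigma>"
  then have "s 0 \<le> s i" using strict_mono_on_leD[OF sm, of 0 i] by simp
  then show ?thesis using dl by simp
qed

lemma v_L: "v ! L = dollar" by (simp add: nth_append bw_len)

lemma v_blk: "i < \<sigma> \<Longrightarrow> L - P (Suc i) \<le> p \<Longrightarrow> p < L - P i \<Longrightarrow> v ! p = s i"
proof -
  assume a: "i < \<sigma>" "L - P (Suc i) \<le> p" "p < L - P i"
  have le: "P (Suc i) \<le> L" using a(1) P_le_L[of "Suc i"] by (metis Suc_leI)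
  define d where "d = L - Suc p"
  have "p = L - Suc d" "P i \<le> d" "d < P (Suc i)" using a le unfolding d_def by auto
  then have "block_word \<sigma> s k ! p = s i" using bw_nth[OF a(1)] by simp
  moreover have "p < L" using a by simp
  ultimately show ?thesis by (simp add: nth_append bw_len)
qed

lemma v_cover: "p < L \<Longrightarrow> \<exists>i<\<sigma>. L - P (Suc i) \<le> p \<and> p < L - P i \<and> v ! p = s i"
proof -
  assume p: "p < L"
  obtain i where i: "i < \<sigma>" "P i \<le> L - Suc p" "L - Suc p < P (Suc i)"
    using bw_cover[where d="L - Suc p" and n=\<sigma> and k=k] p by auto
  have "L - P (Suc i) \<le> p" "p < L - P i" using i p by auto
  then show ?thesis using v_blk i(1) by blast
qed

lemma v_inv: "i < \<sigma> \<Longrightarrow> p \<le> L \<Longrightarrow> v ! p = s i \<Longrightarrow> L - P (Suc i) \<le> p \<and> p < L - P i"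
proof -
  assume a: "i < \<sigma>" "p \<le> L" "v ! p = s i"
  have "p \<noteq> L" using a v_L dl_ne[OF a(1)] by metis
  then obtain i' where "i' < \<sigma>" "L - P (Suc i') \<le> p" "p < L - P i'" "v ! p = s i'"
    using v_cover[of p] a(2) by (metis le_neq_implies_less)
  then show ?thesis using s_inj a by metis
qed

lemma v_change: "Suc q \<le> L \<Longrightarrow> v ! q \<noteq> v ! Suc q \<Longrightarrow> \<exists>i<\<sigma>. Suc q = L - P i \<and> v ! q = s i"
proof -
  assume a: "Suc q \<le> L" "v ! q \<noteq> v ! Suc q"
  obtain i where i: "i<\<sigma>" "L - P (Suc i) \<le> q" "q < L - P i" "v ! q = s i"
    using v_cover[of q] a(1) by (auto simp: Suc_le_eq)
  have "Suc q = L - P i"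
  proof (rule ccontr)
    assume "Suc q \<noteq> L - P i"
    then have "v ! Suc q = s i" using v_blk i by simp
    then show False using a i by simp
  qed
  then show ?thesis using i by blast
qed

lemma v_uniq: "Suc q1 \<le> L \<Longrightarrow> v ! q1 \<noteq> v ! Suc q1 \<Longrightarrow> Suc q2 \<le> L \<Longrightarrow> v ! q2 \<noteq> v ! Suc q2
  \<Longrightarrow> v ! q1 = v ! q2 \<Longrightarrow> q1 = q2"
  using v_change s_inj by (metis Suc_inject)

lemma v_next: "i < \<sigma> \<Longrightarrow> v ! (L - P i) \<noteq> s i"
proof (cases i)
  case 0 then show ?thesis using v_L dl_ne[of 0] sg by auto
next
  case (Suc i')
  assume i: "i < \<sigma>"
  have "P i' + 2 \<le> P i" using P_strict[of i' i] Suc i by simp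
  moreover have "P i \<le> L" using P_le_L i by simp
  ultimately have "v ! (L - P i) = s i'" using v_blk[of i' "L - P i"] Suc i by simp
  then show ?thesis using s_inj Suc i by (metis Suc_lessD n_not_Suc_n)
qed


abbreviation SS :: "nat set" where
  "SS \<equiv> (\<lambda>i. L - P i - 1) ` {..<\<sigma>} \<union> (\<lambda>i. L - P i) ` {..<\<sigma>}"

lemma blk_facts: "i < \<sigma> \<Longrightarrow> P (Suc i) = P i + k i \<and> P i + k i \<le> L \<and> k i \<ge> 2"
  using P_le_L[of "Suc i"] kg[of i] by simp

lemma rep_cover:
  assumes m: "0 < m" and j: "j \<le> L" and sf: "suffix (replicate m c) (take (Suc j) v)"
  shows "\<exists>j'\<in>SS. suffix (replicate m c) (take (Suc j') v)"
proof (cases "j = L")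
  case True
  then have "j \<in> SS" using sg by force
  then show ?thesis using sf by blast
next
  case False
  then have jL: "j < L" using j by simp
  have jv: "j < length v" using j len_v by simp
  from sf[unfolded occ_nth[OF jv]] have mj: "m \<le> Suc j" and cv: "\<And>u. u < m \<Longrightarrow> c = v ! (Suc j - m + u)"
    by auto
  obtain i where i: "i<\<sigma>" "L - P (Suc i) \<le> j" "j < L - P i" "v ! j = s i"
    using v_cover[OF jL] by blast
  have bf: "P (Suc i) = P i + k i" "P i + k i \<le> L" using blk_facts[OF i(1)] by auto
  have "c = v ! j" using cv[of "m - 1"] m mj by simp
  then have c: "c = s i" using i by simp
  have "v ! (Suc j - m) = s i" using cv[of 0] m c by simp
  moreover have "Suc j - m \<le> L" using j m by simp
  ultimately have p0: "L - P (Suc i) \<le> Suc j - m" using v_inv[OF i(1), of "Suc j - m"] by blast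
  define j' where "j' = L - P i - 1"
  have j'S: "j' \<in> SS" using i(1) unfolding j'_def by blast
  have j'v: "j' < length v" using len_v unfolding j'_def by simp
  have "suffix (replicate m c) (take (Suc j') v)"
    unfolding occ_nth[OF j'v]
  proof (intro conjI allI impI)
    show "length (replicate m c) \<le> Suc j'" using i mj unfolding j'_def by simp
    fix u assume u: "u < length (replicate m c)"
    have u': "u < m" using u by simp
    have "L - P (Suc i) \<le> Suc j' - m + u" "Suc j' - m + u < L - P i"
      using u' i(3) p0 bf mj unfolding j'_def by linarith+
    then have "v ! (Suc j' - m + u) = s i" by (rule v_blk[OF i(1)])
    then show "replicate m c ! u = v ! (Suc j' - length (replicate m c) + u)" using u c by simp
  qed
  then show ?thesis using j'S by blast
qed

lemma chg_in:
  assumes x: "x \<noteq> []" and la: "last x \<noteq> a" and j: "j \<le> L"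
    and sf: "suffix (x @ [a]) (take (Suc j) v)"
  shows "\<exists>i<\<sigma>. j = L - P i \<and> last x = s i"
proof -
  have jv: "j < length v" using j len_v by simp
  from sf[unfolded occ_nth[OF jv]] have mj: "Suc (length x) \<le> Suc j"
    and cv: "\<And>u. u < Suc (length x) \<Longrightarrow> (x @ [a]) ! u = v ! (Suc j - Suc (length x) + u)"
    by auto
  have n: "length x \<ge> 1" using x by (cases x) auto
  have "(x @ [a]) ! (length x - 1) = last x" using x by (simp add: nth_append last_conv_nth)
  then have l1: "last x = v ! (j - 1)" using cv[of "length x - 1"] n mj by simp
  have l2: "a = v ! (Suc (j - 1))" using cv[of "length x"] n mj by simp
  obtain i where "i<\<sigma>" "Suc (j - 1) = L - P i" "v ! (j - 1) = s i"
    using v_change[of "j - 1"] l1 l2 la n mj j by auto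
  then show ?thesis using l1 n mj by auto
qed

lemma const_aux: "(\<forall>t. Suc t < length x \<longrightarrow> x ! t = x ! Suc t) \<Longrightarrow> u < length x \<Longrightarrow> x ! u = x ! 0"
proof (induction u)
  case 0 then show ?case by simp
next
  case (Suc u)
  then have "x ! u = x ! Suc u" by (meson Suc.prems)
  moreover have "x ! u = x ! 0" by (rule Suc.IH[OF Suc.prems(1)]) (use Suc.prems(2) in simp)
  ultimately show ?case by simp
qed

lemma const_rm:
  assumes rm: "right_maximal v x" and x: "x \<noteq> []"
  shows "x = replicate (length x) (hd x)"
proof (rule ccontr)
  assume nc: "x \<noteq> replicate (length x) (hd x)"
  have "\<exists>t. Suc t < length x \<and> x ! t \<noteq> x ! Suc t"
  proof (rule ccontr)
    assume "\<not> ?thesis"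
    then have h: "\<forall>u<length x. x ! u = x ! 0" using const_aux by blast
    have "x = replicate (length x) (hd x)"
    proof (rule nth_equalityI)
      show "length x = length (replicate (length x) (hd x))" by simp
      fix u assume "u < length x"
      then have "x ! u = x ! 0" using h by blast
      also have "\<dots> = hd x" using x by (simp add: hd_conv_nth)
      finally show "x ! u = replicate (length x) (hd x) ! u" using \<open>u < length x\<close> by simp
    qed
    then show False using nc by simp
  qed
  then obtain t where t: "Suc t < length x" "x ! t \<noteq> x ! Suc t" by blast
  obtain a b where ab: "a \<noteq> b" "sublist (x @ [a]) v" "sublist (x @ [b]) v"
    using rm unfolding right_maximal_def by blast
  obtain j1 where j1: "j1 < length v" "suffix (x @ [a]) (take (Suc j1) v)"
    using sublist_occ[OF _ ab(2)] by auto
  obtain j2 where j2: "j2 < length v" "suffix (x @ [b]) (take (Suc j2) v)"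
    using sublist_occ[OF _ ab(3)] by auto
  define n where "n = length x"
  from j1(2)[unfolded occ_nth[OF j1(1)]] have m1: "Suc n \<le> Suc j1"
    and c1: "\<And>u. u < Suc n \<Longrightarrow> (x @ [a]) ! u = v ! (Suc j1 - Suc n + u)"
    unfolding n_def by auto
  from j2(2)[unfolded occ_nth[OF j2(1)]] have m2: "Suc n \<le> Suc j2"
    and c2: "\<And>u. u < Suc n \<Longrightarrow> (x @ [b]) ! u = v ! (Suc j2 - Suc n + u)"
    unfolding n_def by auto
  have tn: "Suc t < n" using t n_def by simp
  have xa: "(x @ [a]) ! t = x ! t" "(x @ [a]) ! Suc t = x ! Suc t"
    "(x @ [b]) ! t = x ! t" "(x @ [b]) ! Suc t = x ! Suc t"
    using tn n_def by (simp_all add: nth_append)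
  have e1: "v ! (Suc j1 - Suc n + t) = x ! t" "v ! Suc (Suc j1 - Suc n + t) = x ! Suc t"
    using c1[of t] c1[of "Suc t"] tn xa by auto
  have e2: "v ! (Suc j2 - Suc n + t) = x ! t" "v ! Suc (Suc j2 - Suc n + t) = x ! Suc t"
    using c2[of t] c2[of "Suc t"] tn xa by auto
  have L1: "Suc (Suc j1 - Suc n + t) \<le> L" using tn m1 j1(1) len_v by linarith
  have L2: "Suc (Suc j2 - Suc n + t) \<le> L" using tn m2 j2(1) len_v by linarith
  have "Suc j1 - Suc n + t = Suc j2 - Suc n + t"
    by (rule v_uniq[OF L1 _ L2]) (use e1 e2 t in simp_all)
  then have "j1 = j2" using m1 m2 by simp
  moreover have "a = v ! j1" using c1[of n] m1 n_def by simp
  moreover have "b = v ! j2" using c2[of n] m2 n_def by simp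
  ultimately show False using ab(1) by simp
qed

lemma upper: "suffixient v SS"
  unfolding suffixient_def
proof (intro conjI allI impI)
  show "SS \<subseteq> {..<length v}" using len_v by auto
  fix y assume "right_extension v y"
  then obtain x a where y: "y = x @ [a]" and rm: "right_maximal v x" and sb: "sublist (x @ [a]) v"
    unfolding right_extension_def by blast
  obtain j where j: "j < length v" "suffix (x @ [a]) (take (Suc j) v)"
    using sublist_occ[OF _ sb] by auto
  have jL: "j \<le> L" using j len_v by simp
  show "\<exists>j\<in>SS. suffix y (take (Suc j) v)"
  proof (cases "x = []")
    case True
    then show ?thesis using rep_cover[of 1 j a] j jL y by simp
  next
    case False
    define c where "c = hd x"
    define n where "n = length x"
    have xr: "x = replicate n c" using const_rm[OF rm False] c_def n_def by simp
    have n0: "n \<noteq> 0" using False n_def by simp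
    show ?thesis
    proof (cases "a = c")
      case True
      have "y = replicate n c @ [c]" using y xr True by simp
      also have "\<dots> = replicate (Suc n) c" by (simp add: replicate_append_same)
      finally show ?thesis using rep_cover[of "Suc n" j c] j jL y by simp
    next
      case ne: False
      have "last x = c" using xr n0 by simp
      then obtain i where "i<\<sigma>" "j = L - P i" using chg_in[OF False _ jL j(2)] ne by auto
      then have "j \<in> SS" by blast
      then show ?thesis using j y by blast
    qed
  qed
qed


lemma lower:
  assumes suf: "suffixient v S'" and i: "i < \<sigma>"
  shows "L - P i - 1 \<in> S'" "L - P i \<in> S'"
proof -
  have bf: "P (Suc i) = P i + k i" "P i + k i \<le> L" "k i \<ge> 2" using blk_facts[OF i] by auto
  define x where "x = replicate (k i - 1) (s i)"
  define nx where "nx = v ! (L - P i)"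
  have nxs: "nx \<noteq> s i" using v_next[OF i] nx_def by simp
  have lx: "length x = k i - 1" using x_def by simp
  have S'sub: "S' \<subseteq> {..<length v}" using suf unfolding suffixient_def by blast
  have j1v: "L - P i - 1 < length v" using len_v by simp
  have o1: "suffix (x @ [s i]) (take (Suc (L - P i - 1)) v)"
    unfolding occ_nth[OF j1v]
  proof (intro conjI allI impI)
    show "length (x @ [s i]) \<le> Suc (L - P i - 1)" using lx bf by simp
    fix u assume u: "u < length (x @ [s i])"
    then have u': "u < k i" using lx bf by simp
    have "L - P (Suc i) \<le> Suc (L - P i - 1) - length (x @ [s i]) + u"
         "Suc (L - P i - 1) - length (x @ [s i]) + u < L - P i"
      using u' lx bf by simp_all
    then have "v ! (Suc (L - P i - 1) - length (x @ [s i]) + u) = s i" by (rule v_blk[OF i])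
    moreover have "(x @ [s i]) ! u = s i" using u' lx unfolding x_def by (simp add: nth_append)
    ultimately show "(x @ [s i]) ! u = v ! (Suc (L - P i - 1) - length (x @ [s i]) + u)" by simp
  qed
  have j2v: "L - P i < length v" using len_v by simp
  have o2: "suffix (x @ [nx]) (take (Suc (L - P i)) v)"
    unfolding occ_nth[OF j2v]
  proof (intro conjI allI impI)
    show "length (x @ [nx]) \<le> Suc (L - P i)" using lx bf by simp
    fix u assume u: "u < length (x @ [nx])"
    then have u': "u < k i" using lx bf by simp
    show "(x @ [nx]) ! u = v ! (Suc (L - P i) - length (x @ [nx]) + u)"
    proof (cases "u = k i - 1")
      case True
      then show ?thesis using lx bf nx_def by (simp add: nth_append)
    next
      case False
      then have u2: "u < k i - 1" using u' by simp
      have "L - P (Suc i) \<le> Suc (L - P i) - length (x @ [nx]) + u"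
           "Suc (L - P i) - length (x @ [nx]) + u < L - P i"
        using u2 lx bf by simp_all
      then have "v ! (Suc (L - P i) - length (x @ [nx]) + u) = s i" by (rule v_blk[OF i])
      moreover have "(x @ [nx]) ! u = s i" using u2 lx unfolding x_def by (simp add: nth_append)
      ultimately show ?thesis by simp
    qed
  qed
  have rm: "right_maximal v x"
    unfolding right_maximal_def
    by (rule exI[of _ "s i"], rule exI[of _ nx]) (use nxs o1 o2 occ_sublist in blast)
  have re1: "right_extension v (x @ [s i])"
    unfolding right_extension_def using rm o1 occ_sublist by blast
  have re2: "right_extension v (x @ [nx])"
    unfolding right_extension_def using rm o2 occ_sublist by blast
  obtain j1 where j1: "j1 \<in> S'" "suffix (x @ [s i]) (take (Suc j1) v)"
    using suf re1 unfolding suffixient_def by blast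
  obtain j2 where j2: "j2 \<in> S'" "suffix (x @ [nx]) (take (Suc j2) v)"
    using suf re2 unfolding suffixient_def by blast
  have j1v': "j1 < length v" using j1 S'sub by auto
  have j2L: "j2 \<le> L" using j2 S'sub len_v by auto
  from j1(2)[unfolded occ_nth[OF j1v']] have m1: "k i \<le> Suc j1"
    and c1: "\<And>u. u < k i \<Longrightarrow> (x @ [s i]) ! u = v ! (Suc j1 - k i + u)"
    using lx bf by auto
  have "(x @ [s i]) ! (k i - 1) = s i" using lx by (simp add: nth_append)
  then have "v ! j1 = s i" using c1[of "k i - 1"] bf m1 by simp
  then have a1: "j1 < L - P i" using v_inv[OF i, of j1] j1v' len_v by simp
  have "(x @ [s i]) ! 0 = s i" using lx bf unfolding x_def by (simp add: nth_append)
  then have "v ! (Suc j1 - k i) = s i" using c1[of 0] bf by simp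
  then have "L - P (Suc i) \<le> Suc j1 - k i" using v_inv[OF i, of "Suc j1 - k i"] a1 by simp
  then have "j1 = L - P i - 1" using a1 bf m1 by simp
  then show "L - P i - 1 \<in> S'" using j1 by simp
  have xne: "x \<noteq> []" "last x = s i" using lx bf unfolding x_def by auto
  obtain i' where "i' < \<sigma>" "j2 = L - P i'" "last x = s i'"
    using chg_in[OF xne(1) _ j2L j2(2)] xne(2) nxs by auto
  then have "j2 = L - P i" using s_inj[OF i] xne(2) by metis
  then show "L - P i \<in> S'" using j2 by simp
qed

lemma card_SS: "card SS = 2 * \<sigma>"
proof -
  have inj: "inj_on (\<lambda>i. L - P i) {..<\<sigma>}"
  proof (rule inj_onI)
    fix a b assume ab: "a \<in> {..<\<sigma>}" "b \<in> {..<\<sigma>}" "L - P a = L - P b"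
    show "a = b"
    proof (rule ccontr)
      assume "a \<noteq> b"
      then consider "a < b" | "b < a" by linarith
      then show False
      proof cases
        case 1 then show False using P_strict[of a b] P_le_L[of b] ab by simp
      next
        case 2 then show False using P_strict[of b a] P_le_L[of a] ab by simp
      qed
    qed
  qed
  have inj2: "inj_on (\<lambda>i. L - P i - 1) {..<\<sigma>}"
  proof (rule inj_onI)
    fix a b assume ab: "a \<in> {..<\<sigma>}" "b \<in> {..<\<sigma>}" "L - P a - 1 = L - P b - 1"
    have "L - P a \<ge> 2" "L - P b \<ge> 2" using blk_facts[of a] blk_facts[of b] ab by auto
    then have "L - P a = L - P b" using ab(3) by simp
    then show "a = b" using inj ab by (simp add: inj_on_def)
  qed
  have disj: "(\<lambda>i. L - P i - 1) ` {..<\<sigma>} \<inter> (\<lambda>i. L - P i) ` {..<\<sigma>} = {}"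
  proof (rule ccontr)
    assume "\<not> ?thesis"
    then obtain a b where ab: "a < \<sigma>" "b < \<sigma>" "L - P a - 1 = L - P b" by auto
    have ba: "P a + 2 \<le> L" using blk_facts[OF ab(1)] by simp
    show False
    proof (cases "b \<le> a")
      case True then show False using P_mono[OF True] ba ab by simp
    next
      case False then show False using P_strict[of a b] ab ba P_le_L[of b] by simp
    qed
  qed
  show ?thesis
    by (subst card_Un_disjoint) (use disj card_image[OF inj] card_image[OF inj2] in auto)
qed

lemma main: "min_suffixient_size v = 2 * \<sigma>"
  unfolding min_suffixient_size_def
proof (rule Least_equality)
  show "\<exists>S. suffixient v S \<and> card S = 2 * \<sigma>" using upper card_SS by blast
  fix n assume "\<exists>S. suffixient v S \<and> card S = n"
  then obtain S' where S': "suffixient v S'" "card S' = n" by blast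
  have "finite S'" using S' unfolding suffixient_def by (meson finite_lessThan finite_subset)
  moreover have "SS \<subseteq> S'" using lower[OF S'(1)] by blast
  ultimately have "card SS \<le> card S'" by (rule card_mono)
  then show "2 * \<sigma> \<le> n" using card_SS S' by simp
qed

end

theorem lemma2:
  fixes \<sigma> :: nat and s :: "nat \<Rightarrow> 'a::linorder" and k :: "nat \<Rightarrow> nat" and dollar :: 'a
  assumes "\<sigma> \<ge> 1"
    and "strict_mono_on {..<\<sigma>} s"
    and "\<And>i. i < \<sigma> \<Longrightarrow> k i > 1"
    and "dollar < s 0"
  shows "min_suffixient_size (block_word \<sigma> s k @ [dollar]) = 2 * \<sigma>"
  by (rule main[OF assms])

end
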